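(* Let $f:\mathbf{R}^n\to[-\infty,\infty]$ be an arbitrary function and define $\underline{f}(x)=\operatorname{ap\,liminf}_{y\to x}f(y)$ for $x\in\mathbf{R}^n$. Then $\underline{f}$ is a Borel function.
   Context: For $x\in\mathbf{R}^n$, $\operatorname{ap\,liminf}_{y\to x}f(y)=\sup\bigl(\mathbf{R}\cap\{t:\Theta^n(\mathscr{L}^n\llcorner\{y:f(y)<t\},x)=0\}\bigr)$, where $\mathscr{L}^n\llcorner B$ denotes Lebesgue outer measure restricted to $B$ and $\Theta^n(\mu,x)=\lim_{r\downarrow0}\mu(\mathbf{B}(x,r))/(\alpha(n)r^n)$ (Euclidean closed balls, $\alpha(n)$ the volume of the unit ball), the density being said to exist only when this limit exists. *)

theory Defs
  imports "HOL-Analysis.Analysis"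
begin

definition density_zero :: "'a::euclidean_space set \<Rightarrow> 'a \<Rightarrow> bool" where
  "density_zero B x \<longleftrightarrow>
     ((\<lambda>r. outer_measure_of lebesgue (B \<inter> cball x r)
            / ennreal (measure lborel (cball (0::'a) 1) * r ^ DIM('a)))
        \<longlongrightarrow> 0) (at_right 0)"

text \<open>Approximate lower limit; the supremum of the empty set is -\<infinity>.\<close>
definition ap_liminf :: "('a::euclidean_space \<Rightarrow> ereal) \<Rightarrow> 'a \<Rightarrow> ereal" where
  "ap_liminf f x = Sup (ereal ` {t::real. density_zero {y. f y < ereal t} x})"

end

theory Submission
  imports Defs
begin

lemma dz_mono:
  fixes A B :: "'a::euclidean_space set"
  assumes "A \<subseteq> B" "density_zero B x"
  shows "density_zero A x"
  unfolding density_zero_def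
proof (rule tendsto_sandwich[of "\<lambda>_. 0" _ _ "\<lambda>r. outer_measure_of lebesgue (B \<inter> cball x r)
            / ennreal (measure lborel (cball (0::'a) 1) * r ^ DIM('a))"])
  show "\<forall>\<^sub>F n in at_right 0. (0::ennreal) \<le> outer_measure_of lebesgue (A \<inter> cball x n) /
          ennreal (measure lborel (cball (0::'a) 1) * n ^ DIM('a))" by simp
  show "\<forall>\<^sub>F n in at_right 0. outer_measure_of lebesgue (A \<inter> cball x n) /
          ennreal (measure lborel (cball (0::'a) 1) * n ^ DIM('a))
          \<le> outer_measure_of lebesgue (B \<inter> cball x n) /
          ennreal (measure lborel (cball (0::'a) 1) * n ^ DIM('a))"
    using assms(1) by (intro always_eventually allI) (rule divide_right_mono_ennreal, rule outer_measure_of_mono, blast)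
qed (use assms(2) density_zero_def in auto)

lemma open_aux:
  fixes B :: "'a::euclidean_space set"
  shows "open {x. \<exists>s>\<rho>. outer_measure_of lebesgue (B \<inter> cball x s) < a}"
proof (rule openI)
  fix x assume "x \<in> {x. \<exists>s>\<rho>. outer_measure_of lebesgue (B \<inter> cball x s) < a}"
  then obtain s where s: "s > \<rho>" "outer_measure_of lebesgue (B \<inter> cball x s) < a" by auto
  define e where "e = (s - \<rho>) / 2"
  have e: "e > 0" using s by (simp add: e_def)
  have "ball x e \<subseteq> {x. \<exists>s>\<rho>. outer_measure_of lebesgue (B \<inter> cball x s) < a}"
  proof
    fix y assume y: "y \<in> ball x e"
    have "cball y (\<rho> + e) \<subseteq> cball x s"
    proof
      fix z assume "z \<in> cball y (\<rho> + e)"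
      then have "dist y z \<le> \<rho> + e" by simp
      moreover have "dist x y < e" using y by simp
      moreover have "dist x z \<le> dist x y + dist y z" by (rule dist_triangle)
      ultimately have "dist x z \<le> s" unfolding e_def by argo
      then show "z \<in> cball x s" by simp
    qed
    then have "outer_measure_of lebesgue (B \<inter> cball y (\<rho> + e)) \<le> outer_measure_of lebesgue (B \<inter> cball x s)"
      by (intro outer_measure_of_mono) auto
    then show "y \<in> {x. \<exists>s>\<rho>. outer_measure_of lebesgue (B \<inter> cball x s) < a}"
      using s e by (auto intro!: exI[of _ "\<rho> + e"])
  qed
  then show "\<exists>e>0. ball x e \<subseteq> {x. \<exists>s>\<rho>. outer_measure_of lebesgue (B \<inter> cball x s) < a}"
    using e by blast
qed

lemma div_less_aux:
  fixes g :: ennreal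
  assumes "b > 0" "t \<ge> 0"
  shows "g / ennreal b < ennreal t \<longleftrightarrow> g < ennreal (t * b)"
proof -
  have "g / ennreal b < ennreal t \<longleftrightarrow> g < ennreal t * ennreal b"
    using assms by (intro divide_less_ennreal) auto
  also have "ennreal t * ennreal b = ennreal (t * b)" using assms by (simp add: ennreal_mult)
  finally show ?thesis .
qed

lemma arch_aux: "(0::real) < x \<Longrightarrow> \<exists>k::nat. 1 / (real k + 1) < x"
  using reals_Archimedean[of x] by (auto simp: field_simps)

lemma floor_aux:
  fixes z :: real
  assumes "z \<ge> 1"
  shows "\<exists>j::nat. real j + 1 \<le> z \<and> z < real j + 2"
proof -
  define N where "N = nat \<lfloor>z\<rfloor>"
  have "real N \<le> z" "z < real N + 1" using assms unfolding N_def
    by (auto simp: of_nat_nat)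
  then have "N \<ge> 1" using assms by linarith
  then show ?thesis using \<open>real N \<le> z\<close> \<open>z < real N + 1\<close>
    by (intro exI[of _ "N - 1"]) (auto simp: of_nat_diff)
qed

lemma dz_char:
  fixes B :: "'a::euclidean_space set"
  defines "c \<equiv> measure lborel (cball (0::'a) 1)"
  shows "density_zero B x \<longleftrightarrow> (\<forall>m::nat. \<exists>k::nat. \<forall>j\<ge>k. \<exists>s > 1/(real j+1).
     outer_measure_of lebesgue (B \<inter> cball x s) < ennreal (1/(real m+1) * c * (1/(real j+1))^DIM('a)))"
    (is "_ \<longleftrightarrow> ?Q")
proof -
  define n where "n = DIM('a)"
  define g where "g r = outer_measure_of lebesgue (B \<inter> cball x r)" for r
  define D where "D r = g r / ennreal (c * r ^ n)" for r
  define \<rho> where "\<rho> j = 1 / (real j + 1)" for j :: nat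
  have c: "c > 0" unfolding c_def by (rule content_cball_pos) simp
  have \<rho>pos: "\<rho> j > 0" for j unfolding \<rho>_def by simp
  have gmono: "g r \<le> g s" if "r \<le> s" for r s
    unfolding g_def using that by (intro outer_measure_of_mono) auto
  have Dless: "D r < ennreal t \<longleftrightarrow> g r < ennreal (t * (c * r ^ n))" if "r > 0" "t \<ge> 0" for r t
    unfolding D_def using that c by (intro div_less_aux) auto
  have dz: "density_zero B x \<longleftrightarrow> (D \<longlongrightarrow> 0) (at_right 0)"
    unfolding density_zero_def D_def g_def c_def n_def ..
  show ?thesis
  proof
    assume T: "density_zero B x"
    show ?Q
    proof
      fix m :: nat
      define \<eta> where "\<eta> = \<rho> m / 2 ^ n"
      have \<eta>: "\<eta> > 0" unfolding \<eta>_def using \<rho>pos by simp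
      have "\<forall>\<^sub>F r in at_right 0. D r < ennreal \<eta>"
        using T \<eta> unfolding dz by (intro order_tendstoD(2)) auto
      then obtain b where b: "b > 0" "\<And>r. r > 0 \<Longrightarrow> r < b \<Longrightarrow> D r < ennreal \<eta>"
        unfolding eventually_at_right_field by auto
      obtain k where k: "\<rho> k < b / 2" using arch_aux[of "b/2"] b unfolding \<rho>_def by auto
      have "\<exists>s > \<rho> j. g s < ennreal (\<rho> m * c * \<rho> j ^ n)" if "j \<ge> k" for j
      proof (intro exI conjI)
        have "\<rho> j \<le> \<rho> k" unfolding \<rho>_def using that by (simp add: frac_le)
        then have s: "2 * \<rho> j > 0" "2 * \<rho> j < b" using k \<rho>pos[of j] by auto
        show "2 * \<rho> j > \<rho> j" using \<rho>pos[of j] by simp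
        have "g (2 * \<rho> j) < ennreal (\<eta> * (c * (2 * \<rho> j) ^ n))"
          using b(2)[OF s] Dless[OF s(1), of \<eta>] \<eta> by simp
        also have "\<eta> * (c * (2 * \<rho> j) ^ n) = \<rho> m * c * \<rho> j ^ n"
          unfolding \<eta>_def by (simp add: power_mult_distrib)
        finally show "g (2 * \<rho> j) < ennreal (\<rho> m * c * \<rho> j ^ n)" .
      qed
      then show "\<exists>k::nat. \<forall>j\<ge>k. \<exists>s > 1/(real j+1).
         outer_measure_of lebesgue (B \<inter> cball x s) < ennreal (1/(real m+1) * c * (1/(real j+1))^DIM('a))"
        unfolding g_def \<rho>_def n_def by blast
    qed
  next
    assume Q: ?Q
    have Q': "\<exists>k. \<forall>j\<ge>k. \<exists>s > \<rho> j. g s < ennreal (\<rho> m * c * \<rho> j ^ n)" for m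
      using Q unfolding g_def \<rho>_def n_def by blast
    have "(D \<longlongrightarrow> 0) (at_right 0)"
    proof (rule order_tendstoI)
      fix a :: ennreal assume "a < 0" then show "\<forall>\<^sub>F r in at_right 0. a < D r" by simp
    next
      fix a :: ennreal assume a: "0 < a"
      then obtain b where b: "0 < b" "b < a" using dense by blast
      then obtain e where e: "b = ennreal e" "e \<ge> 0" by (cases b) auto
      have e0: "e > 0" using b e by simp
      obtain m where m: "\<rho> m < e / 2 ^ n" using arch_aux[of "e / 2 ^ n"] e0 unfolding \<rho>_def by auto
      obtain k where k: "\<And>j. j \<ge> k \<Longrightarrow> \<exists>s > \<rho> j. g s < ennreal (\<rho> m * c * \<rho> j ^ n)"
        using Q'[of m] by blast
      have "D r < a" if r: "r > 0" "r < \<rho> k" for r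
      proof -
        have z: "1 / r > real k + 1" using r unfolding \<rho>_def by (simp add: field_simps)
        then obtain j :: nat where j: "real j + 1 \<le> 1 / r" "1 / r < real j + 2"
          using floor_aux[of "1/r"] by auto
        have jk: "j \<ge> k" using j z by linarith
        have rj: "r \<le> \<rho> j" unfolding \<rho>_def using j(1) r by (simp add: field_simps)
        have rj0: "0 \<le> r * real j" using r by simp
        have h: "1 < r * real j + r * 2" using j(2) r by (simp add: field_simps)
        have h3: "2 * r * (real j + 1) = 2 * (r * real j) + 2 * r" by (simp add: algebra_simps)
        have h2: "1 \<le> 2 * r * (real j + 1)" using h rj0 h3 by linarith
        have rj2: "\<rho> j \<le> 2 * r" unfolding \<rho>_def using h2 by (simp add: field_simps)
        obtain s where s: "s > \<rho> j" "g s < ennreal (\<rho> m * c * \<rho> j ^ n)" using k[OF jk] by blast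
        have "g r \<le> g s" using rj s by (intro gmono) auto
        also have "\<dots> < ennreal (\<rho> m * c * \<rho> j ^ n)" by (rule s(2))
        also have "\<dots> \<le> ennreal (e * (c * r ^ n))"
        proof (rule ennreal_leI)
          have "\<rho> j ^ n \<le> (2 * r) ^ n" using rj2 \<rho>pos[of j] by (intro power_mono) auto
          also have "\<dots> = 2 ^ n * r ^ n" by (simp add: power_mult_distrib)
          finally have 1: "\<rho> j ^ n \<le> 2 ^ n * r ^ n" .
          have "\<rho> m * c * \<rho> j ^ n \<le> \<rho> m * c * (2 ^ n * r ^ n)"
            using 1 \<rho>pos[of m] c by (intro mult_left_mono) auto
          also have "\<dots> = (\<rho> m * 2 ^ n) * (c * r ^ n)" by simp
          also have "\<dots> \<le> e * (c * r ^ n)"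
            using m c r by (intro mult_right_mono) (auto simp: field_simps)
          finally show "\<rho> m * c * \<rho> j ^ n \<le> e * (c * r ^ n)" .
        qed
        finally have "D r < ennreal e" using Dless[OF r(1) e(2)] by simp
        then show ?thesis using b e by simp
      qed
      then show "\<forall>\<^sub>F r in at_right 0. D r < a"
        unfolding eventually_at_right_field using \<rho>pos[of k] by blast
    qed
    then show "density_zero B x" unfolding dz .
  qed
qed

lemma dz_borel:
  fixes B :: "'a::euclidean_space set"
  shows "{x. density_zero B x} \<in> sets borel"
proof -
  define c where "c = measure lborel (cball (0::'a) 1)"
  define S where "S m j = {x. \<exists>s > 1/(real j+1).
     outer_measure_of lebesgue (B \<inter> cball x s) < ennreal (1/(real m+1) * c * (1/(real j+1))^DIM('a))}"
    for m j :: nat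
  have S: "S m j \<in> sets borel" for m j unfolding S_def by (rule borel_open[OF open_aux])
  have eq1: "{x. density_zero B x} = {x. \<forall>m. \<exists>k. \<forall>j\<ge>k. x \<in> S m j}"
    unfolding S_def c_def by (simp add: dz_char)
  have eq2: "{x. \<forall>m. \<exists>k. \<forall>j\<ge>k. x \<in> S m j} = (\<Inter>m. \<Union>k. \<Inter>j\<in>{j. k \<le> j}. S m j)"
    by auto
  note eq = eq1 eq2
  have "(\<Inter>m. \<Union>k. \<Inter>j\<in>{j. k \<le> j}. S m j) \<in> sets borel"
    using S by (intro sets.countable_INT'' sets.countable_UN'') auto
  then show ?thesis using eq by simp
qed

theorem lemma4p7:
  fixes f :: "'a::euclidean_space \<Rightarrow> ereal"
  shows "(\<lambda>x. ap_liminf f x) \<in> borel_measurable borel"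
proof -
  define F where "F = (\<lambda>q x. if density_zero {y. f y < ereal q} x then ereal q else -\<infinity>)"
  have eq: "ap_liminf f x = (SUP q\<in>\<rat>. F q x)" for x
  proof (rule antisym)
    show "ap_liminf f x \<le> (SUP q\<in>\<rat>. F q x)"
      unfolding ap_liminf_def
    proof (rule Sup_least)
      fix y assume "y \<in> ereal ` {t. density_zero {y. f y < ereal t} x}"
      then obtain t where t: "y = ereal t" "density_zero {y. f y < ereal t} x" by auto
      show "y \<le> (SUP q\<in>\<rat>. F q x)"
      proof (rule dense_le)
        fix z assume z: "z < y"
        show "z \<le> (SUP q\<in>\<rat>. F q x)"
        proof (cases z)
          case (real u)
          then have "u < t" using z t by simp
          then obtain q where q: "q \<in> \<rat>" "u < q" "q < t" using Rats_dense_in_real by blast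
          have "density_zero {y. f y < ereal q} x"
            by (rule dz_mono[OF _ t(2)]) (use q in \<open>auto intro: order.strict_trans\<close>)
          then have "F q x = ereal q" by (simp add: F_def)
          then have "ereal q \<le> (SUP q\<in>\<rat>. F q x)" using q(1) by (metis SUP_upper)
          moreover have "ereal u \<le> ereal q" using q by simp
          ultimately show ?thesis using real by (metis order.trans)
        qed (use z in auto)
      qed
    qed
    show "(SUP q\<in>\<rat>. F q x) \<le> ap_liminf f x"
      unfolding ap_liminf_def F_def by (rule SUP_least) (auto intro: Sup_upper)
  qed
  have "(\<lambda>x. SUP q\<in>\<rat>. F q x) \<in> borel_measurable borel"
  proof (rule borel_measurable_SUP)
    show "countable (\<rat>::real set)" by (rule countable_rat)
    fix q :: real
    have "F q = (\<lambda>x. if x \<in> {x. density_zero {y. f y < ereal q} x} then ereal q else -\<infinity>)"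
      unfolding F_def by auto
    also have "\<dots> \<in> borel_measurable borel"
      using dz_borel[of "{y. f y < ereal q}"] by (intro measurable_If_set) auto
    finally show "F q \<in> borel_measurable borel" .
  qed
  then show ?thesis using eq by simp
qed

end
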